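(* Let $X=\{x_1,\dots,x_m\}$ be any $m$-point metric space, let $n\ge m$, and let $\mathbf{r}=(r_1,\dots,r_m)$ be positive integers with $\sum_i r_i=n$. Then there exist a finite metric space $Y$ with points $y_i^\alpha$ ($1\le i\le m$, $1\le\alpha\le r_i$) and the surjection $f\colon Y\to X$, $f(y_i^\alpha)=x_i$ (so $\#f^{-1}(x_i)=r_i$), such that $F_{X,\mathbf{r}}\big(d_Y(y_i^\alpha,y_j^\beta)\big)\neq0$.
   Context: Write $d_{ij}=d_X(x_i,x_j)$ and let $\delta_{ij}$ be the Kronecker delta. The polynomial $F_{X,\mathbf{r}}$ in variables $a=(a_{ij}^{\alpha\beta})$ ($i,j\in\{1,\dots,m\}$, $1\le\alpha\le r_i$, $1\le\beta\le r_j$) is defined as follows. For each choice $(\beta_1,\dots,\beta_m)$ with $1\le\beta_j\le r_j$, let $M^{(\beta_1,\dots,\beta_m)}(a)$ be the $n\times n$ matrix whose rows and columns are indexed by pairs $(i,\alpha)$, $1\le i\le m$, $1\le\alpha\le r_i$, in lexicographic order, with entry in row $(i,\alpha)$ and column $(j,\beta)$ equal to $\delta_{ij}$ if $\beta=\beta_j$, and equal to $e^{-d_{ij}}\,(a_{ij}^{\alpha\beta}-d_{ij})$ if $\beta\neq\beta_j$. Then $F_{X,\mathbf{r}}(a)=\sum_{\beta_1=1}^{r_1}\cdots\sum_{\beta_m=1}^{r_m}\det M^{(\beta_1,\dots,\beta_m)}(a)$. *)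

theory Defs
  imports "HOL-Analysis.Analysis" "HOL-Combinatorics.Permutations"
begin

text \<open>Points of X are indexed 0..<m; points of Y are pairs (i, alpha) with i < m, alpha < r i
  (0-based versions of the paper's indices).\<close>

definition metric_on :: "'a set \<Rightarrow> ('a \<Rightarrow> 'a \<Rightarrow> real) \<Rightarrow> bool" where
  "metric_on S d \<longleftrightarrow>
     (\<forall>x\<in>S. \<forall>y\<in>S. (d x y = 0 \<longleftrightarrow> x = y) \<and> d x y = d y x \<and>
        (\<forall>z\<in>S. d x z \<le> d x y + d y z))"

definition det_on :: "'a set \<Rightarrow> ('a \<Rightarrow> 'a \<Rightarrow> real) \<Rightarrow> real" where
  "det_on I M = (\<Sum>p | p permutes I. of_int (sign p) * (\<Prod>x\<in>I. M x (p x)))"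

definition idx :: "nat \<Rightarrow> (nat \<Rightarrow> nat) \<Rightarrow> (nat \<times> nat) set" where
  "idx m r = {(i, \<alpha>). i < m \<and> \<alpha> < r i}"

definition Mmat :: "(nat \<Rightarrow> nat \<Rightarrow> real) \<Rightarrow> (nat \<Rightarrow> nat)
     \<Rightarrow> ((nat \<times> nat) \<Rightarrow> (nat \<times> nat) \<Rightarrow> real) \<Rightarrow> (nat \<times> nat) \<Rightarrow> (nat \<times> nat) \<Rightarrow> real" where
  "Mmat d b a = (\<lambda>(i, \<alpha>) (j, \<beta>).
      if \<beta> = b j then (if i = j then 1 else 0)
      else exp (- d i j) * (a (i, \<alpha>) (j, \<beta>) - d i j))"

definition F_poly :: "nat \<Rightarrow> (nat \<Rightarrow> nat \<Rightarrow> real) \<Rightarrow> (nat \<Rightarrow> nat)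
     \<Rightarrow> ((nat \<times> nat) \<Rightarrow> (nat \<times> nat) \<Rightarrow> real) \<Rightarrow> real" where
  "F_poly m d r a = (\<Sum>b \<in> PiE {..<m} (\<lambda>j. {..<r j}). det_on (idx m r) (Mmat d b a))"

end

theory Submission imports Defs "Jordan_Normal_Form.Determinant" begin

lemma det_on_mat:
  assumes bij: "bij_betw e {0..<n} I"
  shows "det_on I M = det (mat n n (\<lambda>(k,l). M (e k) (e l)))"
proof -
  define e' where "e' = inv_into {0..<n} e"
  have e'e: "e' (e k) = k" if "k < n" for k
    using bij that unfolding e'_def by (simp add: bij_betw_inv_into_left)
  have ee': "e (e' x) = x" if "x \<in> I" for x
    using bij that unfolding e'_def by (simp add: bij_betw_inv_into_right)
  have eI: "e k \<in> I" if "k < n" for k using bij that by (auto simp: bij_betw_def)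
  have e'I: "e' x < n" if "x \<in> I" for x
    using bij that unfolding e'_def
    by (metis atLeastLessThan_iff bij_betw_def inv_into_into)
  have finI: "finite I" using bij bij_betw_finite by blast
  define cj where "cj = (\<lambda>q x. if x \<in> I then e (q (e' x)) else x)"
  define ci where "ci = (\<lambda>p k. if k \<in> {0..<n} then e' (p (e k)) else k)"
  have "det (mat n n (\<lambda>(k,l). M (e k) (e l))) =
     (\<Sum>q \<in> {q. q permutes {0..<n}}. of_int (sign q) * (\<Prod>k=0..<n. M (e k) (e (q k))))"
    by (subst det_def'[of _ n]) (auto intro!: sum.cong prod.cong simp: permutes_in_image)
  also have "\<dots> = det_on I M"
    unfolding det_on_def
  proof (rule sum.reindex_bij_witness[where j = cj and i = ci])
    fix q assume q: "q \<in> {q. q permutes {0..<n}}"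
    then have qp: "q permutes {0..<n}" by simp
    interpret pb: permutes_bij_finite q "{0..<n}" I e e' "cj q"
      by unfold_locales (use qp bij e'e in \<open>auto simp: cj_def\<close>)
    show "ci (cj q) = q"
      using qp by (auto simp: fun_eq_iff ci_def cj_def e'e eI permutes_in_image permutes_not_in)
    show "cj q \<in> {p. p permutes I}" using pb.permutes_p' by simp
    have "(\<Prod>x\<in>I. M x (cj q x)) = (\<Prod>k=0..<n. M (e k) (cj q (e k)))"
      by (rule prod.reindex_bij_betw[OF bij, symmetric])
    also have "\<dots> = (\<Prod>k=0..<n. M (e k) (e (q k)))"
      by (rule prod.cong) (auto simp: cj_def eI e'e)
    finally show "of_int (sign (cj q)) * (\<Prod>x\<in>I. M x (cj q x)) =
        of_int (sign q) * (\<Prod>k=0..<n. M (e k) (e (q k)))"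
      using pb.sign_p' by simp
  next
    fix p assume p: "p \<in> {p. p permutes I}"
    then have pp: "p permutes I" by simp
    interpret pb: permutes_bij_finite p I "{0..<n}" e' e "ci p"
      by unfold_locales
        (use pp bij_betw_inv_into[OF bij] ee' finI in \<open>auto simp: ci_def e'_def\<close>)
    show "cj (ci p) = p"
      using pp by (auto simp: fun_eq_iff ci_def cj_def ee' e'I permutes_in_image permutes_not_in)
    show "ci p \<in> {q. q permutes {0..<n}}" using pb.permutes_p' by simp
  qed
  finally show ?thesis ..
qed


lemma det_on_cong:
  assumes "\<And>x y. x \<in> I \<Longrightarrow> y \<in> I \<Longrightarrow> M x y = N x y"
  shows "det_on I M = det_on I N"
  unfolding det_on_def
  by (intro sum.cong refl arg_cong2[where f="(*)"] prod.cong)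
     (auto intro!: assms simp: permutes_in_image)

lemma det_on_mult:
  assumes "finite I"
  shows "det_on I (\<lambda>x y. \<Sum>z\<in>I. A x z * B z y) = det_on I A * det_on I B"
proof -
  obtain e where bij: "bij_betw e {0..<card I} I"
    using ex_bij_betw_nat_finite[OF assms] by blast
  let ?n = "card I"
  have eI: "e k \<in> I" if "k < ?n" for k using bij that by (auto simp: bij_betw_def)
  have "mat ?n ?n (\<lambda>(k,l). (\<Sum>z\<in>I. A (e k) z * B z (e l))) =
        mat ?n ?n (\<lambda>(k,l). A (e k) (e l)) * mat ?n ?n (\<lambda>(k,l). B (e k) (e l))"
  proof (rule eq_matI)
    fix i j assume ij: "i < dim_row (mat ?n ?n (\<lambda>(k,l). A (e k) (e l)) * mat ?n ?n (\<lambda>(k,l). B (e k) (e l)))"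
      "j < dim_col (mat ?n ?n (\<lambda>(k,l). A (e k) (e l)) * mat ?n ?n (\<lambda>(k,l). B (e k) (e l)))"
    then have i: "i < ?n" and j: "j < ?n" by auto
    have "(\<Sum>z\<in>I. A (e i) z * B z (e j)) = (\<Sum>k=0..<?n. A (e i) (e k) * B (e k) (e j))"
      by (rule sum.reindex_bij_betw[OF bij, symmetric])
    then show "mat ?n ?n (\<lambda>(k,l). (\<Sum>z\<in>I. A (e k) z * B z (e l))) $$ (i, j) =
       (mat ?n ?n (\<lambda>(k,l). A (e k) (e l)) * mat ?n ?n (\<lambda>(k,l). B (e k) (e l))) $$ (i, j)"
      using i j by (simp add: scalar_prod_def row_def col_def)
  qed auto
  then show ?thesis
    by (simp add: det_on_mat[OF bij] det_mult[of _ ?n])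
qed

lemma det_on_diag_only:
  assumes fin: "finite I" and SI: "S \<subseteq> I"
    and hS: "\<And>x y. x \<in> S \<Longrightarrow> y \<in> I \<Longrightarrow> M x y \<noteq> 0 \<Longrightarrow> y = x"
    and hN: "\<And>x y. x \<in> I - S \<Longrightarrow> y \<in> I \<Longrightarrow> M x y \<noteq> 0 \<Longrightarrow> y = x \<or> y \<in> S"
  shows "det_on I M = (\<Prod>x\<in>I. M x x)"
proof -
  have zero: "(\<Prod>x\<in>I. M x (p x)) = 0" if p: "p permutes I" "p \<noteq> id" for p
  proof (rule ccontr)
    assume "(\<Prod>x\<in>I. M x (p x)) \<noteq> 0"
    then have nz: "M x (p x) \<noteq> 0" if "x \<in> I" for x using fin that by auto
    have pI: "p x \<in> I" if "x \<in> I" for x using p(1) that by (simp add: permutes_in_image)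
    have fS: "p s = s" if "s \<in> S" for s using hS[OF that pI nz] that SI by auto
    have "p x = x" for x
    proof (cases "x \<in> I")
      case True
      show ?thesis
      proof (cases "x \<in> S")
        case True then show ?thesis using fS by auto
      next
        case False
        with hN[of x "p x"] \<open>x \<in> I\<close> pI nz have "p x = x \<or> p x \<in> S" by auto
        then show ?thesis
        proof
          assume "p x \<in> S"
          then have "p (p x) = p x" using fS by auto
          then have "p x = x" using permutes_inj[OF p(1)] by (auto dest: injD)
          then show ?thesis .
        qed
      qed
    next
      case False then show ?thesis using p(1) by (simp add: permutes_not_in)
    qed
    then show False using p(2) by (auto simp: fun_eq_iff)
  qed
  have "det_on I M = (\<Sum>p\<in>{id}. of_int (sign p) * (\<Prod>x\<in>I. M x (p x)))"
    unfolding det_on_def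
    by (rule sum.mono_neutral_right) (auto simp: permutes_id finite_permutations[OF fin] zero)
  then show ?thesis by simp
qed


lemma idx_Sigma: "idx m r = Sigma {..<m} (\<lambda>i. {..<r i})"
  by (auto simp: idx_def)

lemma finite_idx: "finite (idx m r)"
  by (simp add: idx_Sigma)

lemma det_Mmat:
  fixes m :: nat and dX :: "nat \<Rightarrow> nat \<Rightarrow> real" and r b :: "nat \<Rightarrow> nat" and \<epsilon> :: real
  assumes dii: "\<And>i. i < m \<Longrightarrow> dX i i = 0"
    and b: "b \<in> PiE {..<m} (\<lambda>j. {..<r j})"
  defines "dY \<equiv> (\<lambda>(i::nat, \<alpha>::nat) (j, \<beta>). if i = j then (if \<alpha> = \<beta> then 0 else \<epsilon>) else dX i j)"
  shows "det_on (idx m r) (Mmat dX b dY) = (\<Prod>i<m. (- \<epsilon>) ^ (r i - 1))"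
proof -
  let ?I = "idx m r"
  let ?M = "Mmat dX b dY"
  have bi: "b i < r i" if "i < m" for i using b that by auto
  have Mform: "?M x y = (if fst x = fst y then (if snd y = b (fst y) then 1 else if x = y then 0 else \<epsilon>) else 0)"
    if "x \<in> ?I" "y \<in> ?I" for x y
    using that dii by (cases x; cases y) (auto simp: Mmat_def dY_def idx_def)
  define piv where "piv = (\<lambda>x::nat\<times>nat. snd x = b (fst x))"
  define E where "E = (\<lambda>x z::nat\<times>nat. if x = z \<or> (fst x = fst z \<and> piv z) then 1 else (0::real))"
  define M' where "M' = (\<lambda>x y. if piv x then ?M x y else (if x = y then - \<epsilon> else 0))"
  have pI: "(fst x, b (fst x)) \<in> ?I" if "x \<in> ?I" for x using that bi by (auto simp: idx_def)
  have fact: "?M x y = (\<Sum>z\<in>?I. E x z * M' z y)" if x: "x \<in> ?I" and y: "y \<in> ?I" for x y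
  proof (cases "piv x")
    case True
    have "E x z = (if z = x then 1 else 0)" for z
      using True by (cases x; cases z) (auto simp: E_def piv_def)
    then have "(\<Sum>z\<in>?I. E x z * M' z y) = M' x y"
      using x by (simp add: if_distrib[of "\<lambda>t. t * _"] sum.delta' finite_idx cong: if_cong)
    then show ?thesis using True by (simp add: M'_def)
  next
    case False
    define p where "p = (fst x, b (fst x))"
    have pp: "p \<in> ?I" "piv p" "p \<noteq> x"
      using pI[OF x] apply (simp add: p_def)
      apply (simp add: p_def piv_def)
      using False unfolding p_def piv_def by (metis snd_conv)
    have "E x z = (if z = x then 1 else 0) + (if z = p then 1 else 0)" for z
      using False pp by (cases x; cases z) (auto simp: E_def piv_def p_def)
    then have "(\<Sum>z\<in>?I. E x z * M' z y) = M' x y + M' p y"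
      using x pp by (simp add: distrib_right sum.distrib if_distrib[of "\<lambda>t. t * _"] sum.delta' finite_idx cong: if_cong)
    also have "\<dots> = ?M x y"
      using False pp Mform[OF x y] Mform[OF pp(1) y] by (cases x; cases y) (auto simp: M'_def p_def piv_def)
    finally show ?thesis by simp
  qed
  have "det_on ?I ?M = det_on ?I (\<lambda>x y. \<Sum>z\<in>?I. E x z * M' z y)"
    by (rule det_on_cong) (use fact in auto)
  also have "\<dots> = det_on ?I E * det_on ?I M'"
    by (rule det_on_mult[OF finite_idx])
  also have "det_on ?I E = (\<Prod>x\<in>?I. E x x)"
    by (rule det_on_diag_only[OF finite_idx, of "{x\<in>?I. piv x}"])
       (auto simp: E_def piv_def split: if_splits)
  also have "\<dots> = 1" by (simp add: E_def)
  also have "det_on ?I M' = (\<Prod>x\<in>?I. M' x x)"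
  proof (rule det_on_diag_only[OF finite_idx, of "{x\<in>?I. \<not> piv x}"])
    fix x y assume "x \<in> ?I - {x\<in>?I. \<not> piv x}" "y \<in> ?I" "M' x y \<noteq> 0"
    then show "y = x \<or> y \<in> {x\<in>?I. \<not> piv x}"
      using Mform[of x y] by (cases x; cases y) (auto simp: M'_def piv_def split: if_splits)
  qed (auto simp: M'_def split: if_splits)
  also have "\<dots> = (\<Prod>i<m. \<Prod>\<alpha><r i. M' (i, \<alpha>) (i, \<alpha>))"
    by (simp add: idx_Sigma prod.Sigma)
  also have "\<dots> = (\<Prod>i<m. (- \<epsilon>) ^ (r i - 1))"
  proof (rule prod.cong[OF refl])
    fix i assume i: "i \<in> {..<m}"
    have "(\<Prod>\<alpha><r i. M' (i, \<alpha>) (i, \<alpha>)) = (\<Prod>\<alpha><r i. if \<alpha> = b i then 1 else - \<epsilon>)"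
      using i Mform by (intro prod.cong refl) (auto simp: M'_def piv_def idx_def)
    also have "\<dots> = (\<Prod>\<alpha>\<in>{..<r i} - {b i}. - \<epsilon>)"
      using bi[of i] i by (subst prod.remove[of _ "b i"]) (auto intro!: prod.cong)
    also have "\<dots> = (- \<epsilon>) ^ (r i - 1)"
      using bi[of i] i by simp
    finally show "(\<Prod>\<alpha><r i. M' (i, \<alpha>) (i, \<alpha>)) = (- \<epsilon>) ^ (r i - 1)" .
  qed
  finally show ?thesis by simp
qed


theorem proposition4p7:
  fixes m n :: nat and dX :: "nat \<Rightarrow> nat \<Rightarrow> real" and r :: "nat \<Rightarrow> nat"
  assumes "metric_on {..<m} dX"
    and "n \<ge> m"
    and "\<forall>i<m. r i \<ge> 1"
    and "(\<Sum>i<m. r i) = n"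
  shows "\<exists>dY :: (nat \<times> nat) \<Rightarrow> (nat \<times> nat) \<Rightarrow> real.
           metric_on (idx m r) dY \<and> F_poly m dX r dY \<noteq> 0"
proof -
  have met: "\<And>i j. i < m \<Longrightarrow> j < m \<Longrightarrow> (dX i j = 0 \<longleftrightarrow> i = j) \<and> dX i j = dX j i"
    and tri: "\<And>i j k. i < m \<Longrightarrow> j < m \<Longrightarrow> k < m \<Longrightarrow> dX i k \<le> dX i j + dX j k"
    using assms(1) unfolding metric_on_def by auto
  have dii: "dX i i = 0" if "i < m" for i using met[OF that that] by simp
  have nonneg: "dX i j \<ge> 0" if "i < m" "j < m" for i j
    using tri[of i j i] met[of i j] dii that by auto
  have pos: "dX i j > 0" if "i < m" "j < m" "i \<noteq> j" for i j
    using nonneg[OF that(1,2)] met[OF that(1,2)] that(3) by auto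
  define D where "D = insert 1 ((\<lambda>(i,j). dX i j) ` {(i,j). i < m \<and> j < m \<and> i \<noteq> j})"
  define \<epsilon> where "\<epsilon> = Min D"
  have finD: "finite D" unfolding D_def
    by (rule finite_insert[THEN iffD2], rule finite_imageI,
        rule finite_subset[of _ "{..<m} \<times> {..<m}"]) auto
  have epos: "\<epsilon> > 0" unfolding \<epsilon>_def
    using finD by (subst Min_gr_iff) (auto simp: D_def pos)
  have ele: "\<epsilon> \<le> dX i j" if "i < m" "j < m" "i \<noteq> j" for i j
    unfolding \<epsilon>_def using finD that by (intro Min_le) (auto simp: D_def)
  define dY where "dY = (\<lambda>(i::nat, \<alpha>::nat) (j, \<beta>). if i = j then (if \<alpha> = \<beta> then 0 else \<epsilon>) else dX i j)"
  have "metric_on (idx m r) dY"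
    unfolding metric_on_def
  proof (intro ballI conjI allI)
    fix x y assume x: "x \<in> idx m r" and y: "y \<in> idx m r"
    obtain i \<alpha> j \<beta> where xe: "x = (i, \<alpha>)" "y = (j, \<beta>)" "i < m" "j < m"
      using x y by (cases x; cases y) (auto simp: idx_def)
    show "(dY x y = 0) = (x = y)" using xe epos met[of i j] by (auto simp: dY_def)
    show "dY x y = dY y x" using xe met[of i j] by (auto simp: dY_def)
    fix z assume z: "z \<in> idx m r"
    obtain k \<gamma> where ze: "z = (k, \<gamma>)" "k < m" using z by (cases z) (auto simp: idx_def)
    show "dY x z \<le> dY x y + dY y z"
    proof -
      have a: "\<epsilon> \<le> dX i j + dX j i" if "i \<noteq> j"
        using ele[of i j] nonneg[of j i] xe that by linarith
      show ?thesis
        using xe(3,4) ze(2) epos a tri[of i j k] nonneg[of i j] nonneg[of j k] nonneg[of i k]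
          met[of i j] met[of j k]
        unfolding xe(1,2) ze(1) dY_def by (cases "i = j"; cases "j = k"; cases "i = k") (simp_all split: if_splits)
    qed
  qed
  moreover have "F_poly m dX r dY \<noteq> 0"
  proof -
    have "F_poly m dX r dY = (\<Sum>b \<in> PiE {..<m} (\<lambda>j. {..<r j}). (\<Prod>i<m. (- \<epsilon>) ^ (r i - 1)))"
      unfolding F_poly_def dY_def
      by (intro sum.cong refl det_Mmat) (use dii in auto)
    also have "\<dots> = real (\<Prod>i<m. r i) * (\<Prod>i<m. (- \<epsilon>) ^ (r i - 1))"
      by (simp add: card_PiE)
    also have "\<dots> \<noteq> 0"
      using assms(3) epos by (auto simp: prod_zero_iff)
    finally show ?thesis .
  qed
  ultimately show ?thesis by blast
qed

end
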